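(* Let $G$ be a (not necessarily connected) graph on $n\ge1$ vertices with adjacency matrix $A$, and let $m\ge2$. Then there exist $\mu\in\mathbb{R}$, $f\in\mathbb{R}^m$, $g\in\mathbb{R}^n$ such that $(\alpha,\mu,f,g)$ with $\alpha=-m$ solves the system \[ (J_m+\alpha I)f=\tfrac{\mu}{2}\mathbf 1,\quad (A-J_n-\alpha I)g=-\tfrac{\mu}{2}\mathbf 1,\quad \langle f,f\rangle+\langle g,g\rangle=1,\quad \langle\mathbf 1,f\rangle+\langle\mathbf 1,g\rangle=0 \] if and only if $m$ is an eigenvalue of $J_n-A$.
   Context: $J_k$ denotes the $k\times k$ all-ones matrix, $\mathbf 1$ the all-ones vector of the appropriate size, $I$ the identity matrix. *)

theory Defs
  imports "HOL-Analysis.Analysis"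
begin

definition adj_matrix :: "('n::finite \<Rightarrow> 'n \<Rightarrow> bool) \<Rightarrow> real^'n^'n" where
  "adj_matrix E = (\<chi> i j. if E i j then 1 else 0)"

definition ones_mat :: "real^'k^'k" where
  "ones_mat = (\<chi> i j. 1)"

definition ones_vec :: "real^'k" where
  "ones_vec = (\<chi> i. 1)"

definition is_eigenvalue :: "real^'k^'k \<Rightarrow> real \<Rightarrow> bool" where
  "is_eigenvalue M lam \<longleftrightarrow> (\<exists>v. v \<noteq> 0 \<and> M *v v = lam *\<^sub>R v)"

end

theory Submission
  imports Defs
begin

lemma ones_dot: "ones_vec \<bullet> (f::real^'k) = (\<Sum>i\<in>UNIV. f$i)"
  by (simp add: inner_vec_def ones_vec_def)

lemma ones_mv: "(ones_mat *v (f::real^'k)) = (ones_vec \<bullet> f) *\<^sub>R ones_vec"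
  unfolding ones_dot by (simp add: vec_eq_iff matrix_vector_mult_def ones_mat_def ones_vec_def)

lemma mv1: "(ones_mat + a *\<^sub>R mat 1) *v (f::real^'k) = (ones_vec \<bullet> f) *\<^sub>R ones_vec + a *\<^sub>R f"
  by (simp add: matrix_vector_mult_add_rdistrib ones_mv scaleR_matrix_vector_assoc[symmetric])

lemma mv2: "(M - ones_mat - a *\<^sub>R mat 1) *v (g::real^'k) = M *v g - (ones_vec \<bullet> g) *\<^sub>R ones_vec - a *\<^sub>R g"
  by (simp add: matrix_vector_mult_diff_rdistrib ones_mv scaleR_matrix_vector_assoc[symmetric])

lemma mv3: "(ones_mat - M) *v (g::real^'k) = (ones_vec \<bullet> g) *\<^sub>R ones_vec - M *v g"
  by (simp add: matrix_vector_mult_diff_rdistrib ones_mv)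

lemma ones_ones: "ones_vec \<bullet> (ones_vec::real^'k) = real CARD('k)"
  by (simp add: inner_vec_def ones_vec_def)

theorem lemma3p3:
  fixes E :: "'n::finite \<Rightarrow> 'n \<Rightarrow> bool"
  assumes sym: "\<And>i j. E i j \<longleftrightarrow> E j i"
    and irrefl: "\<And>i. \<not> E i i"
    and m2: "CARD('m::finite) \<ge> 2"
  shows "(\<exists>(\<mu>::real) (f::real^'m) (g::real^'n).
            let \<alpha> = - real CARD('m) in
            (ones_mat + \<alpha> *\<^sub>R mat 1) *v f = (\<mu> / 2) *\<^sub>R ones_vec \<and>
            (adj_matrix E - ones_mat - \<alpha> *\<^sub>R mat 1) *v g = - (\<mu> / 2) *\<^sub>R ones_vec \<and>
            f \<bullet> f + g \<bullet> g = 1 \<and>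
            ones_vec \<bullet> f + ones_vec \<bullet> g = 0)
         \<longleftrightarrow> is_eigenvalue (ones_mat - adj_matrix E) (real CARD('m))"
proof
  let ?m = "real CARD('m)"
  have mpos: "?m > 0" by simp
  assume "\<exists>(\<mu>::real) (f::real^'m) (g::real^'n).
            let \<alpha> = - real CARD('m) in
            (ones_mat + \<alpha> *\<^sub>R mat 1) *v f = (\<mu> / 2) *\<^sub>R ones_vec \<and>
            (adj_matrix E - ones_mat - \<alpha> *\<^sub>R mat 1) *v g = - (\<mu> / 2) *\<^sub>R ones_vec \<and>
            f \<bullet> f + g \<bullet> g = 1 \<and>
            ones_vec \<bullet> f + ones_vec \<bullet> g = 0"
  then obtain \<mu> and f :: "real^'m" and g :: "real^'n" where
    e1: "(ones_vec \<bullet> f) *\<^sub>R ones_vec - ?m *\<^sub>R f = (\<mu> / 2) *\<^sub>R ones_vec"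
    and e2: "adj_matrix E *v g - (ones_vec \<bullet> g) *\<^sub>R ones_vec + ?m *\<^sub>R g = - (\<mu> / 2) *\<^sub>R ones_vec"
    and e3: "f \<bullet> f + g \<bullet> g = 1" and e4: "ones_vec \<bullet> f + ones_vec \<bullet> g = 0"
    by (auto simp: Let_def mv1 mv2)
  have "ones_vec \<bullet> ((ones_vec \<bullet> f) *\<^sub>R ones_vec - ?m *\<^sub>R f) = ones_vec \<bullet> ((\<mu> / 2) *\<^sub>R (ones_vec::real^'m))"
    using e1 by simp
  hence "(ones_vec \<bullet> f) * ?m - ?m * (ones_vec \<bullet> f) = \<mu>/2 * ?m"
    by (simp add: inner_diff_right ones_ones)
  hence mu0: "\<mu> = 0" using mpos by simp
  have "?m *\<^sub>R f = (ones_vec \<bullet> f) *\<^sub>R ones_vec"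
    using e1 mu0 by simp
  hence fc: "f = ((ones_vec \<bullet> f) / ?m) *\<^sub>R ones_vec"
  proof -
    assume fm: "?m *\<^sub>R f = (ones_vec \<bullet> f) *\<^sub>R ones_vec"
    have "f = (1/?m) *\<^sub>R (?m *\<^sub>R f)" using mpos by simp
    also have "\<dots> = (1/?m) *\<^sub>R ((ones_vec \<bullet> f) *\<^sub>R ones_vec)" by (simp only: fm)
    also have "\<dots> = ((ones_vec \<bullet> f) / ?m) *\<^sub>R ones_vec" by simp
    finally show ?thesis .
  qed
  have eig: "(ones_mat - adj_matrix E) *v g = ?m *\<^sub>R g"
    using e2 mu0 unfolding mv3 by (simp add: algebra_simps)
  have "g \<noteq> 0"
  proof
    assume g0: "g = 0"
    hence "ones_vec \<bullet> f = 0" using e4 by simp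
    hence "f = 0" using fc by simp
    thus False using e3 g0 by simp
  qed
  thus "is_eigenvalue (ones_mat - adj_matrix E) ?m"
    unfolding is_eigenvalue_def using eig by blast
next
  let ?m = "real CARD('m)"
  have mpos: "?m > 0" by simp
  assume "is_eigenvalue (ones_mat - adj_matrix E) ?m"
  then obtain v :: "real^'n" where v0: "v \<noteq> 0" and ev: "(ones_mat - adj_matrix E) *v v = ?m *\<^sub>R v"
    unfolding is_eigenvalue_def by blast
  define s where "s = ones_vec \<bullet> v"
  define K where "K = s^2 / ?m + v \<bullet> v"
  have Kpos: "K > 0" using v0 mpos unfolding K_def by (simp add: add_nonneg_pos)
  define t where "t = 1 / sqrt K"
  have sq: "sqrt K * sqrt K = K" using Kpos by simp
  have tt: "t * t * K = 1"
  proof -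
    have "t * t * K = (1 / (sqrt K * sqrt K)) * K" unfolding t_def by simp
    also have "\<dots> = 1" unfolding sq using Kpos by simp
    finally show ?thesis .
  qed
  define f :: "real^'m" where "f = (- t * s / ?m) *\<^sub>R ones_vec"
  define g where "g = t *\<^sub>R v"
  have ev2: "adj_matrix E *v v = s *\<^sub>R ones_vec - ?m *\<^sub>R v"
    using ev unfolding mv3 s_def by (simp add: algebra_simps)
  have c1: "(ones_mat + (- ?m) *\<^sub>R mat 1) *v f = (0 / 2) *\<^sub>R ones_vec"
    unfolding mv1 f_def using mpos by (simp add: ones_ones)
  have c2: "(adj_matrix E - ones_mat - (- ?m) *\<^sub>R mat 1) *v g = - (0 / 2) *\<^sub>R ones_vec"
    unfolding mv2 g_def by (simp add: matrix_vector_mult_scaleR ev2 s_def[symmetric] algebra_simps)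
  have c3: "f \<bullet> f + g \<bullet> g = 1"
  proof -
    have "f \<bullet> f + g \<bullet> g = (t * s / ?m)^2 * ?m + t*t*(v \<bullet> v)"
      unfolding f_def g_def by (simp add: ones_ones power2_eq_square)
    also have "\<dots> = t * t * K" unfolding K_def using mpos by (simp add: field_simps power2_eq_square)
    finally show ?thesis using tt by simp
  qed
  have c4: "ones_vec \<bullet> f + ones_vec \<bullet> g = 0"
    unfolding f_def g_def using mpos by (simp add: ones_ones s_def)
  show "\<exists>(\<mu>::real) (f::real^'m) (g::real^'n).
            let \<alpha> = - real CARD('m) in
            (ones_mat + \<alpha> *\<^sub>R mat 1) *v f = (\<mu> / 2) *\<^sub>R ones_vec \<and>
            (adj_matrix E - ones_mat - \<alpha> *\<^sub>R mat 1) *v g = - (\<mu> / 2) *\<^sub>R ones_vec \<and>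
            f \<bullet> f + g \<bullet> g = 1 \<and>
            ones_vec \<bullet> f + ones_vec \<bullet> g = 0"
    using c1 c2 c3 c4 unfolding Let_def by blast
qed

end
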